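(* Let $\mathcal{C}\subset\mathbb{R}^n$ be a nonempty compact convex set with Euclidean diameter $D$ and let $f$ be continuously differentiable with $\nabla f$ $L$-Lipschitz on $\mathcal{C}$. Fix $T\in\mathbb{N}$, $T\ge1$, and let $\{x^t\}_{t=0}^T$ be generated by the Boosted Stochastic Frank–Wolfe algorithm (described in the context) with constant step decay $\eta_t=\frac1{\sqrt T}$, where the estimators $m^t$ and some (possibly random) auxiliary sequence $\{\sigma_t\}$ satisfy the estimator condition below with $\rho_1,\rho_2\in(0,1]$ and $A,B,C,E\ge0$. Then $$\mathbb{E}\Big[\min_{0\le t\le T-1}\mathrm{Gap}(x^t)\Big]=\mathcal{O}\Big(\frac1{\sqrt T}+\sqrt C\Big),$$ i.e., there is a constant $K_0$ not depending on $T$ such that the left side is at most $K_0\big(\frac1{\sqrt T}+\sqrt C\big)$. In particular, if $C=0$ the rate is $\mathcal{O}(1/\sqrt T)$.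
   Context: Norms are Euclidean; $D=\max_{x,y\in\mathcal{C}}\|x-y\|$; $\mathrm{Gap}(x)=\max_{s\in\mathcal{C}}\langle\nabla f(x),x-s\rangle$. $\mathrm{lmo}(v)$ denotes a (fixed selection of a) point of $\arg\min_{s\in\mathcal{C}}\langle s,v\rangle$. $\mathrm{align}(d,\hat d)=\frac{\langle d,\hat d\rangle}{\|d\|\|\hat d\|}$ if $\hat d\ne0$, $-1$ if $\hat d=0$. Algorithm: inputs $K\ge1$, $\delta\in(0,1]$, step decays $\eta_t>0$, a vector $m^{\rm init}$; $x^0=\mathrm{lmo}(m^{\rm init})$. At iteration $t$, a (random) estimator $m^t$ of $\nabla f(x^t)$ is formed from sampled stochastic gradients. Boosting: $\psi^0=0$, $\Lambda_t=0$, $k=0$; while $k\le K-1$: $r^k=-m^t-\psi^k$, $v^k=\mathrm{lmo}(-r^k)$; if $k=0$, $s^t=v^0$; if $\psi^k\ne0$, $u^k$ is whichever of $v^k-x^t$, $-\psi^k/\|\psi^k\|$ has the larger inner product with $r^k$, else $u^k=v^k-x^t$; if $u^k=0$ stop; $\lambda_k=\langle r^k,u^k\rangle/\|u^k\|^2$, $\phi^k=\psi^k+\lambda_ku^k$; if $\mathrm{align}(-m^t,\phi^k)-\mathrm{align}(-m^t,\psi^k)\ge\delta$ then $\psi^{k+1}=\phi^k$, $\Lambda_t\leftarrow\Lambda_t+\lambda_k$ if $u^k=v^k-x^t$ and $\Lambda_t\leftarrow\Lambda_t(1-\lambda_k/\|\psi^k\|)$ otherwise, $k\leftarrow k+1$;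 else stop. With $\psi$ the last accepted candidate, $\tilde d^t=\psi/\Lambda_t$ if $\Lambda_t\ne0$, else $0$. $\gamma_t=\min\{\eta_t\|s^t-x^t\|/\|\tilde d^t\|,1\}$ if $\tilde d^t\ne0$, else $1$. If $\gamma_t<1$: $x^{t+1}=x^t+\gamma_t\tilde d^t$; otherwise $x^{t+1}=x^t+\eta_t(s^t-x^t)$. Notation: $\Delta^t=m^t-\nabla f(x^t)$; $\mathbb{E}$ full expectation; $\mathbb{E}_t[\cdot]=\mathbb{E}[\cdot\mid\sigma(x^0,\dots,x^t)]$. Estimator condition: for all $t\ge1$, $\mathbb{E}_{t-1}[\|\Delta^t\|^2]\le(1-\rho_1)\|\Delta^{t-1}\|^2+A\sigma_{t-1}^2+\eta_{t-1}^2BD^2+C$ and $\mathbb{E}_{t-1}[\sigma_t^2]\le(1-\rho_2)\sigma_{t-1}^2+\eta_{t-1}^2ED^2$. *)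

theory Defs
  imports "HOL-Probability.Probability"
begin

definition align :: "'v::real_inner \<Rightarrow> 'v \<Rightarrow> real" where
  "align d dh = (if dh = 0 then -1 else inner d dh / (norm d * norm dh))"

definition fw_gap :: "('v::real_inner \<Rightarrow> 'v) \<Rightarrow> 'v set \<Rightarrow> 'v \<Rightarrow> real" where
  "fw_gap grad S x = (SUP s\<in>S. inner (grad x) (x - s))"

definition is_lmo :: "'v::real_inner set \<Rightarrow> ('v \<Rightarrow> 'v) \<Rightarrow> bool" where
  "is_lmo S lmo = (\<forall>v. lmo v \<in> S \<and> (\<forall>s\<in>S. inner (lmo v) v \<le> inner s v))"

fun boost_loop :: "('v::real_inner \<Rightarrow> 'v) \<Rightarrow> 'v \<Rightarrow> 'v \<Rightarrow> real \<Rightarrow> nat \<Rightarrow> 'v \<Rightarrow> real \<Rightarrow> 'v \<times> real" where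
  "boost_loop lmo m x \<delta> 0 \<psi> \<Lambda> = (\<psi>, \<Lambda>)"
| "boost_loop lmo m x \<delta> (Suc n) \<psi> \<Lambda> =
     (let r = - m - \<psi>;
          v = lmo (- r);
          g = v - x;
          fw = (\<psi> = 0 \<or> inner r g \<ge> inner r (- (1 / norm \<psi>) *\<^sub>R \<psi>));
          u = (if fw then g else - (1 / norm \<psi>) *\<^sub>R \<psi>)
      in if u = 0 then (\<psi>, \<Lambda>)
         else (let lam = inner r u / (norm u)\<^sup>2;
                   \<phi> = \<psi> + lam *\<^sub>R u
               in if align (- m) \<phi> - align (- m) \<psi> \<ge> \<delta>
                  then boost_loop lmo m x \<delta> n \<phi>
                         (if fw then \<Lambda> + lam else \<Lambda> * (1 - lam / norm \<psi>))
                  else (\<psi>, \<Lambda>)))"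

definition bsfw_step :: "('v::real_inner \<Rightarrow> 'v) \<Rightarrow> nat \<Rightarrow> real \<Rightarrow> real \<Rightarrow> 'v \<Rightarrow> 'v \<Rightarrow> 'v" where
  "bsfw_step lmo K \<delta> \<eta> x m =
     (let (\<psi>, \<Lambda>) = boost_loop lmo m x \<delta> K 0 0;
          s = lmo m;
          d = (if \<Lambda> \<noteq> 0 then (1 / \<Lambda>) *\<^sub>R \<psi> else 0);
          \<gamma> = (if d \<noteq> 0 then min (\<eta> * norm (s - x) / norm d) 1 else 1)
      in if \<gamma> < 1 then x + \<gamma> *\<^sub>R d else x + \<eta> *\<^sub>R (s - x))"

definition nat_filt :: "'a measure \<Rightarrow> (nat \<Rightarrow> 'a \<Rightarrow> 'b::topological_space) \<Rightarrow> nat \<Rightarrow> 'a measure" where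
  "nat_filt M X t = sigma (space M) (\<Union>i\<le>t. {X i -` A \<inter> space M | A. A \<in> sets borel})"

end

theory Submission
  imports Defs
begin

lemma align_zero[simp]: "align d 0 = -1"
  by (simp add: align_def)

lemma align_pos_scale:
  fixes v :: "'v::real_inner"
  assumes "c > 0" shows "align d (c *\<^sub>R v) = align d v"
  using assms by (auto simp: align_def)

lemma align_neg_scale:
  fixes v :: "'v::real_inner"
  assumes "c < 0" "v \<noteq> 0" shows "align d (c *\<^sub>R v) = - align d v"
  using assms by (auto simp: align_def)

definition binv :: "'v::real_inner set \<Rightarrow> 'v \<Rightarrow> 'v \<Rightarrow> 'v \<Rightarrow> 'v \<times> real \<Rightarrow> bool" where
  "binv S m x g p = ((fst p = 0 \<and> snd p = 0) \<or>
     (snd p > 0 \<and> fst p \<noteq> 0 \<and> x + (1 / snd p) *\<^sub>R fst p \<in> S \<and>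
      align (- m) (fst p) \<ge> align (- m) g \<and> align (- m) (fst p) > 0))"

lemma align_pos_inner:
  fixes m :: "'v::real_inner"
  assumes "align (- m) p > 0" shows "inner m p < 0"
proof -
  have "p \<noteq> 0" using assms by (auto simp: align_def split: if_splits)
  then have "inner (-m) p / (norm m * norm p) > 0" using assms by (simp add: align_def)
  then have "inner (-m) p > 0"
    by (metis divide_le_0_iff linorder_not_le mult_nonneg_nonneg norm_ge_zero)
  then show ?thesis by simp
qed

lemma boost_step:
  fixes S :: "'v::real_inner set"
  assumes lmo: "is_lmo S lmo" and cv: "convex S" and x: "x \<in> S" and d: "0 < \<delta>"
    and inv: "binv S m x (lmo m - x) (\<psi>, \<Lambda>)"
  shows "boost_loop lmo m x \<delta> (Suc n) \<psi> \<Lambda> = (\<psi>, \<Lambda>) \<or>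
    (\<exists>\<psi>' \<Lambda>'. binv S m x (lmo m - x) (\<psi>', \<Lambda>') \<and>
       boost_loop lmo m x \<delta> (Suc n) \<psi> \<Lambda> = boost_loop lmo m x \<delta> n \<psi>' \<Lambda>')"
proof -
  define r where "r = - m - \<psi>"
  define v where "v = lmo (- r)"
  define g where "g = v - x"
  define fw where "fw = (\<psi> = 0 \<or> inner r g \<ge> inner r (- (1 / norm \<psi>) *\<^sub>R \<psi>))"
  define u where "u = (if fw then g else - (1 / norm \<psi>) *\<^sub>R \<psi>)"
  define lam where "lam = inner r u / (norm u)\<^sup>2"
  define \<phi> where "\<phi> = \<psi> + lam *\<^sub>R u"
  define \<Lambda>' where "\<Lambda>' = (if fw then \<Lambda> + lam else \<Lambda> * (1 - lam / norm \<psi>))"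
  have eq: "boost_loop lmo m x \<delta> (Suc n) \<psi> \<Lambda> =
     (if u = 0 then (\<psi>, \<Lambda>) else if align (- m) \<phi> - align (- m) \<psi> \<ge> \<delta>
        then boost_loop lmo m x \<delta> n \<phi> \<Lambda>' else (\<psi>, \<Lambda>))"
    unfolding boost_loop.simps Let_def r_def[symmetric] v_def[symmetric] g_def[symmetric]
      fw_def[symmetric] u_def[symmetric] lam_def[symmetric] \<phi>_def[symmetric] \<Lambda>'_def[symmetric]
    by simp
  have vS: "v \<in> S" and vmin: "\<And>s. s \<in> S \<Longrightarrow> inner v (- r) \<le> inner s (- r)"
    using lmo unfolding is_lmo_def v_def by blast+
  have rg: "inner r g \<ge> 0" using vmin[OF x] by (simp add: g_def inner_diff_right inner_minus_right inner_commute)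
  show ?thesis
  proof (cases "u = 0 \<or> \<not> (align (- m) \<phi> - align (- m) \<psi> \<ge> \<delta>)")
    case True then show ?thesis using eq by auto
  next
    case False
    then have u0: "u \<noteq> 0" and acc: "align (- m) \<phi> - align (- m) \<psi> \<ge> \<delta>" by auto
    have lam0: "lam \<ge> 0" if "fw" using rg that by (simp add: lam_def u_def)
    have "binv S m x (lmo m - x) (\<phi>, \<Lambda>')"
    proof (cases "\<psi> = 0")
      case True
      then have L0: "\<Lambda> = 0" using inv by (auto simp: binv_def)
      have fwT: fw using True by (simp add: fw_def)
      have gg: "g = lmo m - x" using True by (simp add: g_def v_def r_def)
      have ug: "u = g" using fwT by (simp add: u_def)
      have phi: "\<phi> = lam *\<^sub>R g" using True ug by (simp add: \<phi>_def)
      have "\<phi> \<noteq> 0"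
      proof
        assume "\<phi> = 0" then show False using acc True d by simp
      qed
      then have lamnz: "lam \<noteq> 0" using phi by auto
      have lampos: "lam > 0" using lam0[OF fwT] lamnz by simp
      have Lp: "\<Lambda>' = lam" using fwT L0 by (simp add: \<Lambda>'_def)
      have al: "align (- m) \<phi> = align (- m) g" using phi lampos align_pos_scale by simp
      have "inner r u > 0" using lampos u0 by (simp add: lam_def zero_less_divide_iff)
      then have im: "inner (- m) g > 0" using True ug by (simp add: r_def)
      then have "m \<noteq> 0" by auto
      then have "align (- m) g > 0" using im u0 ug by (simp add: align_def divide_neg_pos)
      moreover have "x + (1 / \<Lambda>') *\<^sub>R \<phi> \<in> S" using Lp phi lampos vS by (simp add: g_def)
      ultimately show ?thesis using lampos Lp al \<open>\<phi> \<noteq> 0\<close> gg unfolding binv_def by auto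
    next
      case False
      then have inv2: "\<Lambda> > 0" "x + (1 / \<Lambda>) *\<^sub>R \<psi> \<in> S" "align (- m) \<psi> \<ge> align (- m) (lmo m - x)"
          "align (- m) \<psi> > 0"
        using inv by (auto simp: binv_def)
      show ?thesis
      proof (cases fw)
        case True
        have ug: "u = g" using True by (simp add: u_def)
        have lp: "lam \<ge> 0" using lam0[OF True] .
        have Lp: "\<Lambda>' = \<Lambda> + lam" using True by (simp add: \<Lambda>'_def)
        have Lpos: "\<Lambda>' > 0" using Lp lp inv2 by simp
        have "\<phi> \<noteq> 0"
        proof
          assume "\<phi> = 0" then show False using acc inv2 d by simp
        qed
        moreover have "align (- m) \<phi> \<ge> align (- m) (lmo m - x)" "align (- m) \<phi> > 0"
          using acc inv2 d by auto
        moreover have "x + (1 / \<Lambda>') *\<^sub>R \<phi> \<in> S"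
        proof -
          define p where "p = x + (1 / \<Lambda>) *\<^sub>R \<psi>"
          have psi: "\<psi> = \<Lambda> *\<^sub>R (p - x)" using inv2 by (simp add: p_def)
          have "x + (1 / \<Lambda>') *\<^sub>R \<phi> = (\<Lambda> / \<Lambda>') *\<^sub>R p + (lam / \<Lambda>') *\<^sub>R v"
            using Lpos Lp unfolding \<phi>_def psi ug g_def
            by (simp add: algebra_simps divide_simps) (simp add: scaleR_add_left[symmetric] add_divide_distrib[symmetric])
          moreover have "(\<Lambda> / \<Lambda>') *\<^sub>R p + (lam / \<Lambda>') *\<^sub>R v \<in> S"
            using cv inv2 lp Lpos Lp vS p_def
            by (intro convexD) (auto simp: add_divide_distrib[symmetric])
          ultimately show ?thesis by simp
        qed
        ultimately show ?thesis using Lpos unfolding binv_def by auto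
      next
        case fwF: False
        define c where "c = 1 - lam / norm \<psi>"
        have phi: "\<phi> = c *\<^sub>R \<psi>" using fwF False
          by (simp add: \<phi>_def u_def c_def algebra_simps)
        have False
        proof (cases "c > 0")
          case True then show False using acc d phi align_pos_scale[OF True, of "- m" \<psi>] by simp
        next
          case c: False
          show False
          proof (cases "c = 0")
            case True then show False using acc d phi inv2 by simp
          next
            case False then have "c < 0" using c by simp
            then show False using acc d phi inv2 align_neg_scale[of c \<psi>] \<open>\<psi> \<noteq> 0\<close> by simp
          qed
        qed
        then show ?thesis ..
      qed
    qed
    then show ?thesis using eq u0 acc by auto
  qed
qed

lemma boost_inv:
  fixes S :: "'v::real_inner set"
  assumes lmo: "is_lmo S lmo" and cv: "convex S" and x: "x \<in> S" and d: "0 < \<delta>"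
    and inv: "binv S m x (lmo m - x) (\<psi>, \<Lambda>)"
  shows "binv S m x (lmo m - x) (boost_loop lmo m x \<delta> n \<psi> \<Lambda>)"
  using inv
proof (induction n arbitrary: \<psi> \<Lambda>)
  case 0 then show ?case by simp
next
  case (Suc n)
  from boost_step[OF lmo cv x d Suc.prems, of n] show ?case
    using Suc.IH Suc.prems by auto
qed

lemma bsfw_props:
  fixes S :: "'v::real_inner set" and m :: 'v and K :: nat
  assumes lmo: "is_lmo S lmo" and cv: "convex S" and x: "x \<in> S" and d: "0 < \<delta>"
    and eta: "0 < \<eta>" "\<eta> \<le> 1"
  defines "x' \<equiv> bsfw_step lmo K \<delta> \<eta> x m"
  shows "x' \<in> S \<and> inner m (x' - x) \<le> \<eta> * inner m (lmo m - x) \<and> norm (x' - x) \<le> \<eta> * norm (lmo m - x)"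
proof -
  obtain \<psi> \<Lambda> where bl: "boost_loop lmo m x \<delta> K 0 0 = (\<psi>, \<Lambda>)" by (metis surj_pair)
  have inv: "binv S m x (lmo m - x) (\<psi>, \<Lambda>)"
    using boost_inv[OF lmo cv x d, of m 0 0 K] bl by (simp add: binv_def)
  define s where "s = lmo m"
  define g where "g = s - x"
  define dd where "dd = (if \<Lambda> \<noteq> 0 then (1 / \<Lambda>) *\<^sub>R \<psi> else 0)"
  define \<gamma> where "\<gamma> = (if dd \<noteq> 0 then min (\<eta> * norm (s - x) / norm dd) 1 else 1)"
  have sS: "s \<in> S" using lmo by (simp add: is_lmo_def s_def)
  have xe: "x' = (if \<gamma> < 1 then x + \<gamma> *\<^sub>R dd else x + \<eta> *\<^sub>R (s - x))"
    by (simp only: x'_def bsfw_step_def bl Let_def prod.case dd_def \<gamma>_def s_def)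
  show ?thesis
  proof (cases "\<gamma> < 1")
    case False
    then have xe2: "x' = x + \<eta> *\<^sub>R (s - x)" using xe by simp
    have "x + \<eta> *\<^sub>R (s - x) = (1 - \<eta>) *\<^sub>R x + \<eta> *\<^sub>R s" by (simp add: algebra_simps)
    also have "\<dots> \<in> S" using cv x sS eta by (intro convexD) auto
    finally show ?thesis using xe2 eta by (simp add: s_def)
  next
    case True
    then have xe2: "x' = x + \<gamma> *\<^sub>R dd" using xe by simp
    have ddnz: "dd \<noteq> 0" using True \<gamma>_def by auto
    then have Lnz: "\<Lambda> \<noteq> 0" unfolding dd_def by presburger
    then have inv2: "\<Lambda> > 0" "\<psi> \<noteq> 0" "x + dd \<in> S" "align (- m) \<psi> \<ge> align (- m) g"
      using inv by (auto simp: binv_def dd_def g_def s_def)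
    have dde: "dd = (1 / \<Lambda>) *\<^sub>R \<psi>" using Lnz by (simp add: dd_def)
    have gam: "\<gamma> = \<eta> * norm g / norm dd" using True ddnz by (simp add: \<gamma>_def g_def)
    have g0: "\<gamma> \<ge> 0" using gam eta by simp
    have "x + \<gamma> *\<^sub>R dd = (1 - \<gamma>) *\<^sub>R x + \<gamma> *\<^sub>R (x + dd)" by (simp add: algebra_simps)
    also have "\<dots> \<in> S" using cv x inv2 g0 True by (intro convexD) auto
    finally have in1: "x' \<in> S" using xe2 by simp
    have nrm: "norm (x' - x) = \<eta> * norm g" using xe2 gam g0 ddnz eta by simp
    have inn: "inner m (x' - x) \<le> \<eta> * inner m g"
    proof (cases "m = 0 \<or> g = 0")
      case True then show ?thesis using xe2 gam by auto
    next
      case False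
      have ad: "align (- m) dd = align (- m) \<psi>" using dde inv2 align_pos_scale[of "1 / \<Lambda>" "- m" \<psi>] by simp
      then have "align (- m) dd \<ge> align (- m) g" using inv2 by simp
      then have "inner (- m) dd / (norm m * norm dd) \<ge> inner (- m) g / (norm m * norm g)"
        using False ddnz by (simp add: align_def)
      then have "inner (- m) dd / norm dd \<ge> inner (- m) g / norm g"
        using False ddnz by (simp add: divide_simps split: if_splits)
      then have "(\<eta> * norm g) * (inner (- m) dd / norm dd) \<ge> (\<eta> * norm g) * (inner (- m) g / norm g)"
        using eta by (intro mult_left_mono) auto
      then have "\<gamma> * inner (- m) dd \<ge> \<eta> * inner (- m) g"
        using False gam by (simp add: field_simps)
      then show ?thesis using xe2 by simp
    qed
    show ?thesis using in1 nrm inn by (simp add: g_def s_def)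
  qed
qed

lemma descent:
  fixes f :: "'v::real_inner \<Rightarrow> real"
  assumes SU: "S \<subseteq> U" and f_deriv: "\<forall>y\<in>U. (f has_derivative (\<lambda>h. inner (grad y) h)) (at y)"
    and lip: "\<forall>y\<in>S. \<forall>z\<in>S. norm (grad y - grad z) \<le> L * norm (y - z)"
    and cv: "convex S" and a: "a \<in> S" and b: "b \<in> S"
  shows "f b - f a - inner (grad a) (b - a) \<le> \<bar>L\<bar> * (norm (b - a))\<^sup>2"
proof -
  have seg: "closed_segment a b \<subseteq> S" using closed_segment_subset[OF a b cv] .
  have "norm (f b - f a - inner (grad a) (b - a)) \<le> norm (b - a) * (\<bar>L\<bar> * norm (b - a))"
  proof (rule differentiable_bound_linearization[where S = "closed_segment a b"
        and f' = "\<lambda>y h. inner (grad y) h" and ?x0.0 = a])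
    fix t :: real assume "t \<in> {0..1}"
    then show "a + t *\<^sub>R (b - a) \<in> closed_segment a b"
      unfolding closed_segment_def by (auto intro!: exI[of _ t] simp: algebra_simps)
  next
    fix y assume "y \<in> closed_segment a b"
    then have "y \<in> U" using seg SU by auto
    then show "(f has_derivative (\<lambda>h. inner (grad y) h)) (at y within closed_segment a b)"
      using f_deriv has_derivative_at_withinI by blast
  next
    fix y assume y: "y \<in> closed_segment a b"
    show "onorm ((\<lambda>h. inner (grad y) h) - (\<lambda>h. inner (grad a) h)) \<le> \<bar>L\<bar> * norm (b - a)"
    proof (rule onorm_bound)
      show "0 \<le> \<bar>L\<bar> * norm (b - a)" by simp
      fix h
      have "norm (((\<lambda>h. inner (grad y) h) - (\<lambda>h. inner (grad a) h)) h) = \<bar>inner (grad y - grad a) h\<bar>"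
        by (simp add: inner_diff_left)
      also have "\<dots> \<le> norm (grad y - grad a) * norm h" by (rule Cauchy_Schwarz_ineq2)
      also have "\<dots> \<le> (\<bar>L\<bar> * norm (b - a)) * norm h"
      proof (rule mult_right_mono)
        have "norm (grad y - grad a) \<le> L * norm (y - a)" using lip y seg a by auto
        also have "\<dots> \<le> \<bar>L\<bar> * norm (y - a)" by (simp add: mult_right_mono)
        also have "\<dots> \<le> \<bar>L\<bar> * norm (b - a)" using segment_bound1[OF y] by (simp add: mult_left_mono)
        finally show "norm (grad y - grad a) \<le> \<bar>L\<bar> * norm (b - a)" .
      qed simp
      finally show "norm (((\<lambda>h. inner (grad y) h) - (\<lambda>h. inner (grad a) h)) h) \<le> \<bar>L\<bar> * norm (b - a) * norm h" .
    qed
  next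
    show "a \<in> closed_segment a b" by simp
  qed
  then show ?thesis by (simp add: power2_eq_square mult_ac)
qed

lemma gap_step:
  fixes S :: "'v::real_inner set" and f :: "'v \<Rightarrow> real" and m :: 'v and K :: nat
  assumes Sne: "S \<noteq> {}" and bS: "bounded S" and cv: "convex S" and SU: "S \<subseteq> U"
    and f_deriv: "\<forall>y\<in>U. (f has_derivative (\<lambda>h. inner (grad y) h)) (at y)"
    and lip: "\<forall>y\<in>S. \<forall>z\<in>S. norm (grad y - grad z) \<le> L * norm (y - z)"
    and lmo: "is_lmo S lmo" and x: "x \<in> S" and d: "0 < \<delta>" and eta: "0 < \<eta>" "\<eta> \<le> 1"
  defines "x' \<equiv> bsfw_step lmo K \<delta> \<eta> x m"
  shows "\<eta> * fw_gap grad S x \<le> f x - f x' + 2 * \<eta> * diameter S * norm (m - grad x)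
           + \<bar>L\<bar> * \<eta>\<^sup>2 * (diameter S)\<^sup>2"
proof -
  define D where "D = diameter S"
  define a where "a = norm (m - grad x)"
  define s where "s = lmo m"
  have P: "x' \<in> S" "inner m (x' - x) \<le> \<eta> * inner m (s - x)" "norm (x' - x) \<le> \<eta> * norm (s - x)"
    using bsfw_props[OF lmo cv x d eta, of K m] unfolding x'_def s_def by auto
  have sS: "s \<in> S" and smin: "\<And>z. z \<in> S \<Longrightarrow> inner s m \<le> inner z m"
    using lmo unfolding is_lmo_def s_def by blast+
  have dS: "\<And>y z. y \<in> S \<Longrightarrow> z \<in> S \<Longrightarrow> norm (y - z) \<le> D"
    using diameter_bounded_bound[OF bS] unfolding D_def by (simp add: dist_norm)
  have D0: "D \<ge> 0" using dS x by force
  have a0: "a \<ge> 0" by (simp add: a_def)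
  have ci: "\<And>w. inner (m - grad x) w \<le> a * norm w"
    unfolding a_def by (meson Cauchy_Schwarz_ineq2 abs_le_D1)
  have ci2: "\<And>w. - inner (m - grad x) w \<le> a * norm w"
    unfolding a_def by (metis Cauchy_Schwarz_ineq2 abs_le_D2 abs_minus_cancel)
  have stepn: "norm (x' - x) \<le> \<eta> * D"
  proof -
    have "\<eta> * norm (s - x) \<le> \<eta> * D" using dS[OF sS x] eta by (intro mult_left_mono) auto
    then show ?thesis using P(3) by linarith
  qed
  have desc: "f x' - f x - inner (grad x) (x' - x) \<le> \<bar>L\<bar> * \<eta>\<^sup>2 * D\<^sup>2"
  proof -
    have "f x' - f x - inner (grad x) (x' - x) \<le> \<bar>L\<bar> * (norm (x' - x))\<^sup>2"
      using descent[OF SU f_deriv lip cv x P(1)] .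
    also have "\<dots> \<le> \<bar>L\<bar> * (\<eta> * D)\<^sup>2"
      using stepn by (intro mult_left_mono power_mono) auto
    finally show ?thesis by (simp add: power_mult_distrib mult_ac)
  qed
  have lin: "inner (grad x) (x' - x) \<le> \<eta> * inner m (s - x) + a * (\<eta> * D)"
  proof -
    have "inner (grad x) (x' - x) = inner m (x' - x) - inner (m - grad x) (x' - x)"
      by (simp add: inner_diff_left)
    also have "\<dots> \<le> \<eta> * inner m (s - x) + a * norm (x' - x)" using P(2) ci2[of "x' - x"] by simp
    also have "\<dots> \<le> \<eta> * inner m (s - x) + a * (\<eta> * D)" using stepn a0 by (simp add: mult_left_mono)
    finally show ?thesis .
  qed
  have each: "inner (grad x) (x - z) \<le> (f x - f x' + 2 * \<eta> * D * a + \<bar>L\<bar> * \<eta>\<^sup>2 * D\<^sup>2) / \<eta>"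
    if z: "z \<in> S" for z
  proof -
    have "inner m (s - x) \<le> inner m (z - x)" using smin[OF z] by (simp add: inner_diff_right inner_commute)
    also have "\<dots> = inner (grad x) (z - x) + inner (m - grad x) (z - x)" by (simp add: inner_diff_left)
    also have "\<dots> \<le> - inner (grad x) (x - z) + a * D"
      using ci[of "z - x"] dS[OF z x] a0 mult_left_mono[of "norm (z - x)" D a]
      by (simp add: inner_diff_right)
    finally have "inner m (s - x) \<le> - inner (grad x) (x - z) + a * D" .
    then have "\<eta> * inner m (s - x) \<le> \<eta> * (- inner (grad x) (x - z) + a * D)"
      using eta by (simp add: mult_left_mono)
    then have "\<eta> * inner (grad x) (x - z) \<le> f x - f x' + 2 * \<eta> * D * a + \<bar>L\<bar> * \<eta>\<^sup>2 * D\<^sup>2"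
      using desc lin by (simp add: algebra_simps)
    then show ?thesis using eta by (simp add: field_simps)
  qed
  have "fw_gap grad S x \<le> (f x - f x' + 2 * \<eta> * D * a + \<bar>L\<bar> * \<eta>\<^sup>2 * D\<^sup>2) / \<eta>"
    unfolding fw_gap_def using Sne each by (intro cSUP_least) auto
  then show ?thesis using eta by (simp add: field_simps D_def a_def)
qed

lemma lyap_sum:
  fixes v s :: "nat \<Rightarrow> real"
  assumes vn: "\<And>t. v t \<ge> 0" and sn: "\<And>t. s t \<ge> 0"
    and \<rho>: "0 < \<rho>1" "\<rho>1 \<le> 1" "0 < \<rho>2" "\<rho>2 \<le> 1" and A: "A \<ge> 0"
    and rv: "\<And>t. v (Suc t) \<le> (1 - \<rho>1) * v t + A * s t + c1"
    and rs: "\<And>t. s (Suc t) \<le> (1 - \<rho>2) * s t + e"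
  shows "min \<rho>1 (\<rho>2 / 2) * (\<Sum>t<T. v t) \<le> v 0 + (2 * A / \<rho>2) * s 0 + real T * (c1 + (2 * A / \<rho>2) * e)"
proof -
  define \<alpha> where "\<alpha> = 2 * A / \<rho>2"
  define \<rho> where "\<rho> = min \<rho>1 (\<rho>2 / 2)"
  define W where "W t = v t + \<alpha> * s t" for t
  define c where "c = c1 + \<alpha> * e"
  have a0: "\<alpha> \<ge> 0" using A \<rho> by (simp add: \<alpha>_def)
  have r0: "0 < \<rho>" "\<rho> \<le> 1" using \<rho> by (auto simp: \<rho>_def)
  have Wn: "W t \<ge> 0" for t using vn sn a0 by (simp add: W_def)
  have rW: "W (Suc t) \<le> (1 - \<rho>) * W t + c" for t
  proof -
    have "W (Suc t) \<le> (1 - \<rho>1) * v t + A * s t + c1 + \<alpha> * ((1 - \<rho>2) * s t + e)"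
      using rv[of t] mult_left_mono[OF rs[of t] a0] by (simp add: W_def)
    also have "\<dots> = (1 - \<rho>1) * v t + \<alpha> * (1 - \<rho>2 / 2) * s t + c"
      using \<rho> by (simp add: \<alpha>_def c_def field_simps)
    also have "\<dots> \<le> (1 - \<rho>) * v t + \<alpha> * (1 - \<rho>) * s t + c"
    proof -
      have "(1 - \<rho>1) * v t \<le> (1 - \<rho>) * v t" using vn[of t] by (intro mult_right_mono) (auto simp: \<rho>_def)
      moreover have "\<alpha> * (1 - \<rho>2 / 2) * s t \<le> \<alpha> * (1 - \<rho>) * s t"
        using sn[of t] a0 by (intro mult_right_mono mult_left_mono) (auto simp: \<rho>_def)
      ultimately show ?thesis by linarith
    qed
    also have "\<dots> = (1 - \<rho>) * W t + c" by (simp add: W_def algebra_simps)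
    finally show ?thesis .
  qed
  have ind: "\<rho> * (\<Sum>t<n. W t) + W n \<le> W 0 + real n * c" for n
  proof (induction n)
    case 0 then show ?case by simp
  next
    case (Suc n)
    have "\<rho> * (\<Sum>t<Suc n. W t) + W (Suc n) = \<rho> * (\<Sum>t<n. W t) + \<rho> * W n + W (Suc n)"
      by (simp add: algebra_simps)
    also have "\<dots> \<le> \<rho> * (\<Sum>t<n. W t) + W n + c" using rW[of n] by (simp add: algebra_simps)
    also have "\<dots> \<le> W 0 + real (Suc n) * c" using Suc.IH by (simp add: algebra_simps)
    finally show ?case .
  qed
  have "\<rho> * (\<Sum>t<T. v t) \<le> \<rho> * (\<Sum>t<T. W t)"
    using r0 sn a0 by (intro mult_left_mono sum_mono) (auto simp: W_def)
  also have "\<dots> \<le> W 0 + real T * c" using ind[of T] Wn[of T] by linarith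
  finally show ?thesis by (simp add: \<rho>_def W_def c_def \<alpha>_def)
qed

lemma nat_filt_subalg:
  assumes "\<And>t. X t \<in> borel_measurable M"
  shows "subalgebra M (nat_filt M X t)"
proof -
  define G where "G = (\<Union>i\<le>t. {X i -` A \<inter> space M | A. A \<in> sets borel})"
  have GP: "G \<subseteq> Pow (space M)" by (auto simp: G_def)
  have GM: "G \<subseteq> sets M" using assms by (auto simp: G_def intro!: measurable_sets)
  have "sets (nat_filt M X t) = sigma_sets (space M) G"
    unfolding nat_filt_def G_def[symmetric] using GP by (simp add: sets_measure_of)
  moreover have "sigma_sets (space M) G \<subseteq> sets M" using GM by (rule sets.sigma_sets_subset)
  moreover have "space (nat_filt M X t) = space M"
    unfolding nat_filt_def G_def[symmetric] using GP by (simp add: space_measure_of)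
  ultimately show ?thesis by (simp add: subalgebra_def)
qed

lemma cond_exp_bound:
  assumes P: "prob_space M" and sub: "subalgebra M F" and Y: "integrable M Y" and Z: "integrable M Z"
    and ae: "AE \<omega> in M. real_cond_exp M F Y \<omega> \<le> Z \<omega>"
  shows "integral\<^sup>L M Y \<le> integral\<^sup>L M Z"
proof -
  interpret prob_space M by (rule P)
  have "finite_measure_subalgebra M F"
    using sub by (simp add: finite_measure_subalgebra_def finite_measure_subalgebra_axioms_def
        finite_measure_axioms)
  then interpret sigma_finite_subalgebra M F by (rule finite_measure_subalgebra_is_sigma_finite)
  have "integral\<^sup>L M Y = integral\<^sup>L M (real_cond_exp M F Y)" using real_cond_exp_int(2)[OF Y] by simp
  also have "\<dots> \<le> integral\<^sup>L M Z" using real_cond_exp_int(1)[OF Y] Z ae by (rule integral_mono_AE)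
  finally show ?thesis .
qed

lemma pointwise:
  fixes S :: "'v::real_inner set" and f :: "'v \<Rightarrow> real" and K :: nat
  assumes Sne: "S \<noteq> {}" and bS: "bounded S" and cv: "convex S" and SU: "S \<subseteq> U"
    and f_deriv: "\<forall>y\<in>U. (f has_derivative (\<lambda>h. inner (grad y) h)) (at y)"
    and lip: "\<forall>y\<in>S. \<forall>z\<in>S. norm (grad y - grad z) \<le> L * norm (y - z)"
    and lmo: "is_lmo S lmo" and d: "0 < \<delta>" and eta: "0 < \<eta>" "\<eta> \<le> 1"
    and T: "T \<ge> 1" "real T * \<eta>\<^sup>2 = 1"
    and X0: "X 0 \<in> S" and XS: "\<And>t. X (Suc t) = bsfw_step lmo K \<delta> \<eta> (X t) (mm t)"
    and F: "\<forall>y\<in>S. \<bar>f y\<bar> \<le> F" and kap: "\<kappa> > 0"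
  shows "Min ((\<lambda>t. fw_gap grad S (X t)) ` {0..<T}) \<le> (2 * F + \<bar>L\<bar> * (diameter S)\<^sup>2) * \<eta>
     + diameter S * \<kappa> + diameter S / (\<kappa> * real T) * (\<Sum>t<T. (norm (mm t - grad (X t)))\<^sup>2)"
proof -
  define D where "D = diameter S"
  define G where "G t = fw_gap grad S (X t)" for t
  define a where "a t = norm (mm t - grad (X t))" for t
  define Lb where "Lb = \<bar>L\<bar>"
  have xin: "X t \<in> S" for t
  proof (induction t)
    case 0 then show ?case using X0 .
  next
    case (Suc t) then show ?case using bsfw_props[OF lmo cv _ d eta, of "X t" K "mm t"] XS[of t] by auto
  qed
  have D0: "D \<ge> 0" using diameter_bounded_bound[OF bS] X0 unfolding D_def by (metis dist_self)
  have step: "\<eta> * G t \<le> f (X t) - f (X (Suc t)) + 2 * \<eta> * D * a t + Lb * \<eta>\<^sup>2 * D\<^sup>2" for t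
    using gap_step[OF Sne bS cv SU f_deriv lip lmo xin[of t] d eta, of K "mm t"] XS[of t]
    unfolding G_def D_def a_def Lb_def by simp
  have am: "2 * \<eta> * D * a t \<le> \<eta> * D * ((a t)\<^sup>2 / \<kappa> + \<kappa>)" for t
  proof -
    have "0 \<le> (a t - \<kappa>)\<^sup>2" by simp
    then have "2 * a t * \<kappa> \<le> (a t)\<^sup>2 + \<kappa>\<^sup>2" by (simp add: power2_eq_square algebra_simps)
    then have "2 * a t \<le> (a t)\<^sup>2 / \<kappa> + \<kappa>" using kap by (simp add: field_simps power2_eq_square)
    then have "(\<eta> * D) * (2 * a t) \<le> (\<eta> * D) * ((a t)\<^sup>2 / \<kappa> + \<kappa>)"
      using eta D0 by (intro mult_left_mono) auto
    then show ?thesis by (simp add: mult_ac)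
  qed
  have sum1: "\<eta> * (\<Sum>t<T. G t) \<le> (\<Sum>t<T. f (X t) - f (X (Suc t))) + (\<Sum>t<T. \<eta> * D * ((a t)\<^sup>2 / \<kappa> + \<kappa>))
      + real T * (Lb * \<eta>\<^sup>2 * D\<^sup>2)"
  proof -
    have "\<eta> * (\<Sum>t<T. G t) = (\<Sum>t<T. \<eta> * G t)" by (simp add: sum_distrib_left)
    also have "\<dots> \<le> (\<Sum>t<T. (f (X t) - f (X (Suc t))) + \<eta> * D * ((a t)\<^sup>2 / \<kappa> + \<kappa>) + Lb * \<eta>\<^sup>2 * D\<^sup>2)"
      using step am by (intro sum_mono) (smt (verit))
    also have "\<dots> = (\<Sum>t<T. f (X t) - f (X (Suc t))) + (\<Sum>t<T. \<eta> * D * ((a t)\<^sup>2 / \<kappa> + \<kappa>))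
      + real T * (Lb * \<eta>\<^sup>2 * D\<^sup>2)" by (simp add: sum.distrib)
    finally show ?thesis .
  qed
  have tel: "(\<Sum>t<T. f (X t) - f (X (Suc t))) \<le> 2 * F"
    using sum_lessThan_telescope'[of "\<lambda>t. f (X t)" T] F xin[of 0] xin[of T] by (smt (verit))
  have s2: "(\<Sum>t<T. \<eta> * D * ((a t)\<^sup>2 / \<kappa> + \<kappa>)) = \<eta> * D / \<kappa> * (\<Sum>t<T. (a t)\<^sup>2) + real T * (\<eta> * D * \<kappa>)"
  proof -
    have "(\<Sum>t<T. \<eta> * D * ((a t)\<^sup>2 / \<kappa> + \<kappa>)) = (\<Sum>t<T. \<eta> * D / \<kappa> * (a t)\<^sup>2 + \<eta> * D * \<kappa>)"
      by (rule sum.cong) (simp_all add: distrib_left)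
    also have "\<dots> = \<eta> * D / \<kappa> * (\<Sum>t<T. (a t)\<^sup>2) + real T * (\<eta> * D * \<kappa>)"
      by (simp add: sum.distrib sum_distrib_left)
    finally show ?thesis .
  qed
  have fin: "finite (G ` {0..<T})" "G ` {0..<T} \<noteq> {}" using T by auto
  have mn: "real T * Min (G ` {0..<T}) \<le> (\<Sum>t<T. G t)"
  proof -
    have "real (card {..<T}) * Min (G ` {0..<T}) \<le> (\<Sum>t<T. G t)"
      by (rule sum_bounded_below) (use fin in auto)
    then show ?thesis by simp
  qed
  define R where "R = (2 * F + Lb * D\<^sup>2) * \<eta> + D * \<kappa> + D / (\<kappa> * real T) * (\<Sum>t<T. (a t)\<^sup>2)"
  have TR: "\<eta> * real T * R = 2 * F + Lb * D\<^sup>2 + real T * (\<eta> * D * \<kappa>) + \<eta> * D / \<kappa> * (\<Sum>t<T. (a t)\<^sup>2)"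
  proof -
    have "\<eta> * real T * R = (2 * F + Lb * D\<^sup>2) * (real T * \<eta>\<^sup>2) + real T * (\<eta> * D * \<kappa>)
        + \<eta> * D / \<kappa> * (\<Sum>t<T. (a t)\<^sup>2)"
      using T(1) kap by (simp add: R_def field_simps power2_eq_square)
    then show ?thesis using T by simp
  qed
  have "\<eta> * real T * Min (G ` {0..<T}) \<le> \<eta> * real T * R"
  proof -
    have "\<eta> * real T * Min (G ` {0..<T}) = \<eta> * (real T * Min (G ` {0..<T}))" by simp
    also have "\<dots> \<le> \<eta> * (\<Sum>t<T. G t)" using mn eta by (simp add: mult_left_mono)
    also have "\<dots> \<le> \<eta> * real T * R"
    proof -
      have "real T * (Lb * \<eta>\<^sup>2 * D\<^sup>2) = Lb * D\<^sup>2" using T(2)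
        by (metis mult.assoc mult.commute mult.right_neutral)
      then show ?thesis using sum1 tel s2 TR by linarith
    qed
    finally show ?thesis .
  qed
  then have "Min (G ` {0..<T}) \<le> R" using eta T by (simp add: mult_le_cancel_left_pos)
  then show ?thesis unfolding R_def G_def D_def a_def Lb_def .
qed

theorem theorem5:
  fixes S :: "(real ^ 'n) set"
    and f :: "real ^ 'n \<Rightarrow> real" and grad :: "real ^ 'n \<Rightarrow> real ^ 'n"
    and U :: "(real ^ 'n) set"
    and L \<delta> \<rho>1 \<rho>2 A B C E V0 S0 :: real
    and K :: nat
    and lmo :: "real ^ 'n \<Rightarrow> real ^ 'n" and minit :: "real ^ 'n"
  assumes S: "S \<noteq> {}" "compact S" "convex S"
    and U: "open U" "S \<subseteq> U"
    and f_deriv: "\<forall>y\<in>U. (f has_derivative (\<lambda>h. inner (grad y) h)) (at y)"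
    and grad_cont: "continuous_on U grad"
    and grad_lip: "\<forall>y\<in>S. \<forall>z\<in>S. norm (grad y - grad z) \<le> L * norm (y - z)"
    and K: "K \<ge> 1" and \<delta>: "0 < \<delta>" "\<delta> \<le> 1"
    and lmo: "is_lmo S lmo"
    and \<rho>: "0 < \<rho>1" "\<rho>1 \<le> 1" "0 < \<rho>2" "\<rho>2 \<le> 1"
    and ABCE: "A \<ge> 0" "B \<ge> 0" "C \<ge> 0" "E \<ge> 0"
  shows "\<exists>K0::real. \<forall>T::nat. \<forall>(M::'a measure) x m \<sigma>.
     T \<ge> 1 \<and> prob_space M
     \<and> (\<forall>t. x t \<in> borel_measurable M \<and> m t \<in> borel_measurable M \<and> \<sigma> t \<in> borel_measurable M)
     \<and> (\<forall>\<omega>\<in>space M. x 0 \<omega> = lmo minit)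
     \<and> (\<forall>t. \<forall>\<omega>\<in>space M. x (Suc t) \<omega> = bsfw_step lmo K \<delta> (1 / sqrt T) (x t \<omega>) (m t \<omega>))
     \<and> (\<forall>t. integrable M (\<lambda>\<omega>. (norm (m t \<omega> - grad (x t \<omega>)))\<^sup>2)
            \<and> integrable M (\<lambda>\<omega>. (\<sigma> t \<omega>)\<^sup>2))
     \<and> (\<forall>t\<ge>1. AE \<omega> in M.
          real_cond_exp M (nat_filt M x (t - 1)) (\<lambda>\<omega>. (norm (m t \<omega> - grad (x t \<omega>)))\<^sup>2) \<omega>
            \<le> (1 - \<rho>1) * (norm (m (t - 1) \<omega> - grad (x (t - 1) \<omega>)))\<^sup>2 + A * (\<sigma> (t - 1) \<omega>)\<^sup>2
              + (1 / sqrt T)\<^sup>2 * B * (diameter S)\<^sup>2 + C)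
     \<and> (\<forall>t\<ge>1. AE \<omega> in M.
          real_cond_exp M (nat_filt M x (t - 1)) (\<lambda>\<omega>. (\<sigma> t \<omega>)\<^sup>2) \<omega>
            \<le> (1 - \<rho>2) * (\<sigma> (t - 1) \<omega>)\<^sup>2 + (1 / sqrt T)\<^sup>2 * E * (diameter S)\<^sup>2)
     \<and> prob_space.expectation M (\<lambda>\<omega>. (norm (m 0 \<omega> - grad (x 0 \<omega>)))\<^sup>2) \<le> V0
     \<and> prob_space.expectation M (\<lambda>\<omega>. (\<sigma> 0 \<omega>)\<^sup>2) \<le> S0
     \<longrightarrow> prob_space.expectation M (\<lambda>\<omega>. Min ((\<lambda>t. fw_gap grad S (x t \<omega>)) ` {0..<T}))
           \<le> K0 * (1 / sqrt T + sqrt C)"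
proof -
  define D where "D = diameter S"
  have bS: "bounded S" using S(2) by (rule compact_imp_bounded)
  obtain y0 where y0: "y0 \<in> S" using S(1) by auto
  have D0: "D \<ge> 0" using diameter_bounded_bound[OF bS y0 y0] unfolding D_def by simp
  have fc: "continuous_on S f"
  proof (rule continuous_at_imp_continuous_on, rule ballI)
    fix y assume "y \<in> S"
    then have "y \<in> U" using U(2) by auto
    then show "isCont f y" using f_deriv has_derivative_continuous by blast
  qed
  have "bounded (f ` S)" using compact_continuous_image[OF fc S(2)] by (rule compact_imp_bounded)
  then obtain F0 where F0: "\<forall>z\<in>f ` S. norm z \<le> F0" unfolding bounded_iff by blast
  define F where "F = max F0 0"
  have F: "\<forall>y\<in>S. \<bar>f y\<bar> \<le> F" "F \<ge> 0" using F0 by (auto simp: F_def)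
  define \<rho> where "\<rho> = min \<rho>1 (\<rho>2 / 2)"
  define \<alpha> where "\<alpha> = 2 * A / \<rho>2"
  define c' where "c' = (B + \<alpha> * E) * D\<^sup>2"
  define W where "W = max V0 0 + \<alpha> * max S0 0"
  define K0 where "K0 = 2 * F + \<bar>L\<bar> * D\<^sup>2 + D + D * (W + c') / \<rho> + D / \<rho>"
  have \<rho>0: "\<rho> > 0" using \<rho> by (simp add: \<rho>_def)
  have \<alpha>0: "\<alpha> \<ge> 0" using \<rho> ABCE by (simp add: \<alpha>_def)
  have c'0: "c' \<ge> 0" using \<alpha>0 ABCE by (simp add: c'_def)
  have W0: "W \<ge> 0" using \<alpha>0 by (simp add: W_def)
  have K00: "K0 \<ge> 0" using F D0 W0 c'0 \<rho>0 by (simp add: K0_def)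
  show ?thesis
    apply (rule exI[of _ K0], intro allI impI)
    subgoal premises H for T M x m \<sigma>
    proof -
      have T1: "T \<ge> 1" using H by blast
      have PM: "prob_space M" using H by blast
      have meas: "\<And>t. x t \<in> borel_measurable M" using H by blast
      have x0: "\<And>\<omega>. \<omega> \<in> space M \<Longrightarrow> x 0 \<omega> = lmo minit" using H by blast
      have xs: "\<And>t \<omega>. \<omega> \<in> space M \<Longrightarrow> x (Suc t) \<omega> = bsfw_step lmo K \<delta> (1 / sqrt T) (x t \<omega>) (m t \<omega>)"
        using H by blast
      have int1: "\<And>t. integrable M (\<lambda>\<omega>. (norm (m t \<omega> - grad (x t \<omega>)))\<^sup>2)" using H by blast
      have int2: "\<And>t. integrable M (\<lambda>\<omega>. (\<sigma> t \<omega>)\<^sup>2)" using H by blast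
      have ce1: "\<And>t. t \<ge> 1 \<Longrightarrow> AE \<omega> in M.
          real_cond_exp M (nat_filt M x (t - 1)) (\<lambda>\<omega>. (norm (m t \<omega> - grad (x t \<omega>)))\<^sup>2) \<omega>
            \<le> (1 - \<rho>1) * (norm (m (t - 1) \<omega> - grad (x (t - 1) \<omega>)))\<^sup>2 + A * (\<sigma> (t - 1) \<omega>)\<^sup>2
              + (1 / sqrt T)\<^sup>2 * B * (diameter S)\<^sup>2 + C" using H by blast
      have ce2: "\<And>t. t \<ge> 1 \<Longrightarrow> AE \<omega> in M.
          real_cond_exp M (nat_filt M x (t - 1)) (\<lambda>\<omega>. (\<sigma> t \<omega>)\<^sup>2) \<omega>
            \<le> (1 - \<rho>2) * (\<sigma> (t - 1) \<omega>)\<^sup>2 + (1 / sqrt T)\<^sup>2 * E * (diameter S)\<^sup>2" using H by blast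
      have V0: "integral\<^sup>L M (\<lambda>\<omega>. (norm (m 0 \<omega> - grad (x 0 \<omega>)))\<^sup>2) \<le> V0" using H by blast
      have S0: "integral\<^sup>L M (\<lambda>\<omega>. (\<sigma> 0 \<omega>)\<^sup>2) \<le> S0" using H by blast
      interpret P: prob_space M by (rule PM)
      define \<eta> where "\<eta> = 1 / sqrt (real T)"
      have eta: "0 < \<eta>" "\<eta> \<le> 1" using T1 by (auto simp: \<eta>_def)
      have Teta: "real T * \<eta>\<^sup>2 = 1" using T1 by (simp add: \<eta>_def power_divide)
      define \<kappa> where "\<kappa> = \<eta> + sqrt C"
      have sC0: "sqrt C \<ge> 0" using ABCE by simp
      have kap: "\<kappa> > 0" "\<kappa> \<ge> \<eta>" "\<kappa> \<ge> sqrt C" using eta sC0 unfolding \<kappa>_def by linarith+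
      define aa where "aa t \<omega> = (norm (m t \<omega> - grad (x t \<omega>)))\<^sup>2" for t \<omega>
      define ss where "ss t \<omega> = (\<sigma> t \<omega>)\<^sup>2" for t \<omega>
      define v where "v t = integral\<^sup>L M (aa t)" for t
      define s where "s t = integral\<^sup>L M (ss t)" for t
      have ia: "integrable M (aa t)" for t using int1[of t] by (simp add: aa_def[abs_def])
      have iss: "integrable M (ss t)" for t using int2[of t] by (simp add: ss_def[abs_def])
      have vn: "v t \<ge> 0" for t by (simp add: v_def aa_def)
      have sn: "s t \<ge> 0" for t by (simp add: s_def ss_def)
      have rv: "v (Suc t) \<le> (1 - \<rho>1) * v t + A * s t + (\<eta>\<^sup>2 * B * D\<^sup>2 + C)" for t
      proof -
        have ae: "AE \<omega> in M. real_cond_exp M (nat_filt M x t) (aa (Suc t)) \<omega>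
            \<le> (1 - \<rho>1) * aa t \<omega> + A * ss t \<omega> + (\<eta>\<^sup>2 * B * D\<^sup>2 + C)"
          using ce1[of "Suc t"] unfolding aa_def ss_def \<eta>_def D_def by (simp add: add.assoc)
        have "v (Suc t) \<le> integral\<^sup>L M (\<lambda>\<omega>. (1 - \<rho>1) * aa t \<omega> + A * ss t \<omega> + (\<eta>\<^sup>2 * B * D\<^sup>2 + C))"
          unfolding v_def using PM nat_filt_subalg[OF meas] ia iss ae
          by (intro cond_exp_bound) auto
        also have "\<dots> = (1 - \<rho>1) * v t + A * s t + (\<eta>\<^sup>2 * B * D\<^sup>2 + C)"
          using ia iss by (simp add: v_def s_def P.prob_space)
        finally show ?thesis .
      qed
      have rs: "s (Suc t) \<le> (1 - \<rho>2) * s t + \<eta>\<^sup>2 * E * D\<^sup>2" for t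
      proof -
        have ae: "AE \<omega> in M. real_cond_exp M (nat_filt M x t) (ss (Suc t)) \<omega>
            \<le> (1 - \<rho>2) * ss t \<omega> + \<eta>\<^sup>2 * E * D\<^sup>2"
          using ce2[of "Suc t"] unfolding ss_def \<eta>_def D_def by simp
        have "s (Suc t) \<le> integral\<^sup>L M (\<lambda>\<omega>. (1 - \<rho>2) * ss t \<omega> + \<eta>\<^sup>2 * E * D\<^sup>2)"
          unfolding s_def using PM nat_filt_subalg[OF meas] iss ae
          by (intro cond_exp_bound) auto
        also have "\<dots> = (1 - \<rho>2) * s t + \<eta>\<^sup>2 * E * D\<^sup>2"
          using iss by (simp add: s_def P.prob_space)
        finally show ?thesis .
      qed
      have ly: "\<rho> * (\<Sum>t<T. v t) \<le> v 0 + \<alpha> * s 0 + real T * ((\<eta>\<^sup>2 * B * D\<^sup>2 + C) + \<alpha> * (\<eta>\<^sup>2 * E * D\<^sup>2))"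
        using lyap_sum[where v=v and s=s and ?c1.0="\<eta>\<^sup>2 * B * D\<^sup>2 + C" and e="\<eta>\<^sup>2 * E * D\<^sup>2" and T=T, OF vn sn \<rho> ABCE(1) rv rs] unfolding \<rho>_def \<alpha>_def .
      have Sv: "\<rho> * (\<Sum>t<T. v t) \<le> W + c' + real T * C"
      proof -
        have "v 0 \<le> max V0 0" using V0 by (simp add: v_def aa_def[abs_def])
        moreover have "\<alpha> * s 0 \<le> \<alpha> * max S0 0" using S0 \<alpha>0 by (intro mult_left_mono) (auto simp: s_def ss_def[abs_def])
        moreover have "real T * ((\<eta>\<^sup>2 * B * D\<^sup>2 + C) + \<alpha> * (\<eta>\<^sup>2 * E * D\<^sup>2)) = (real T * \<eta>\<^sup>2) * c' + real T * C"
          by (simp add: c'_def algebra_simps)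
        ultimately show ?thesis using ly Teta by (simp add: W_def)
      qed
      define Mn where "Mn \<omega> = Min ((\<lambda>t. fw_gap grad S (x t \<omega>)) ` {0..<T})" for \<omega>
      define RHS where "RHS \<omega> = (2 * F + \<bar>L\<bar> * D\<^sup>2) * \<eta> + D * \<kappa> + D / (\<kappa> * real T) * (\<Sum>t<T. aa t \<omega>)" for \<omega>
      have pw: "Mn \<omega> \<le> RHS \<omega>" if \<omega>: "\<omega> \<in> space M" for \<omega>
        unfolding Mn_def RHS_def aa_def D_def
      proof (rule pointwise[OF S(1) bS S(3) U(2) f_deriv grad_lip lmo \<delta>(1) eta T1 Teta, of "\<lambda>t. x t \<omega>" K "\<lambda>t. m t \<omega>"])
        show "x 0 \<omega> \<in> S" using x0[OF \<omega>] lmo by (simp add: is_lmo_def)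
        show "\<And>t. x (Suc t) \<omega> = bsfw_step lmo K \<delta> \<eta> (x t \<omega>) (m t \<omega>)" using xs[OF \<omega>] by (simp add: \<eta>_def)
      qed (use F kap in auto)
      have bound: "(2 * F + \<bar>L\<bar> * D\<^sup>2) * \<eta> + D * \<kappa> + D / (\<kappa> * real T) * (\<Sum>t<T. v t) \<le> K0 * (\<eta> + sqrt C)"
      proof -
        have Tpos: "real T > 0" using T1 by simp
        have "D / (\<kappa> * real T) * (\<Sum>t<T. v t) \<le> D / (\<kappa> * real T) * ((W + c' + real T * C) / \<rho>)"
          using Sv \<rho>0 D0 kap Tpos by (intro mult_left_mono) (auto simp: field_simps)
        also have "\<dots> = D / \<rho> * ((W + c') * (\<eta>\<^sup>2 / \<kappa>) + C / \<kappa>)"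
        proof -
          have "\<eta>\<^sup>2 = 1 / real T" using Teta Tpos by (simp add: field_simps)
          then show ?thesis using Tpos kap \<rho>0 by (simp add: field_simps)
        qed
        also have "\<dots> \<le> D / \<rho> * ((W + c') * \<eta> + sqrt C)"
        proof -
          have e1: "\<eta>\<^sup>2 / \<kappa> \<le> \<eta>" using kap eta by (simp add: field_simps power2_eq_square mult_left_mono)
          have e2: "C / \<kappa> \<le> sqrt C"
          proof -
            have "C = sqrt C * sqrt C" using ABCE by simp
            also have "\<dots> \<le> sqrt C * \<kappa>" using kap sC0 by (intro mult_left_mono) auto
            finally show ?thesis using kap by (simp add: field_simps)
          qed
          have "(W + c') * (\<eta>\<^sup>2 / \<kappa>) \<le> (W + c') * \<eta>" using e1 W0 c'0 by (intro mult_left_mono) auto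
          then show ?thesis using e2 D0 \<rho>0 by (intro mult_left_mono) auto
        qed
        finally have t3: "D / (\<kappa> * real T) * (\<Sum>t<T. v t) \<le> D / \<rho> * ((W + c') * \<eta> + sqrt C)" .
        have sC: "sqrt C \<ge> 0" using ABCE by simp
        have "(2 * F + \<bar>L\<bar> * D\<^sup>2) * \<eta> + D * \<kappa> + D / \<rho> * ((W + c') * \<eta> + sqrt C)
            = (2 * F + \<bar>L\<bar> * D\<^sup>2 + D + D * (W + c') / \<rho>) * \<eta> + (D + D / \<rho>) * sqrt C"
          by (simp add: \<kappa>_def algebra_simps add_divide_distrib)
        also have "\<dots> \<le> K0 * \<eta> + K0 * sqrt C"
        proof -
          have q1: "2 * F + \<bar>L\<bar> * D\<^sup>2 + D + D * (W + c') / \<rho> \<le> K0"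
            using D0 \<rho>0 by (simp add: K0_def)
          have q2: "D + D / \<rho> \<le> K0"
            using D0 \<rho>0 F W0 c'0 by (simp add: K0_def)
          have "(2 * F + \<bar>L\<bar> * D\<^sup>2 + D + D * (W + c') / \<rho>) * \<eta> \<le> K0 * \<eta>"
            using q1 eta by (intro mult_right_mono) auto
          moreover have "(D + D / \<rho>) * sqrt C \<le> K0 * sqrt C"
            using q2 sC by (intro mult_right_mono) auto
          ultimately show ?thesis by linarith
        qed
        finally show ?thesis using t3 by (simp add: distrib_left)
      qed
      show ?thesis
      proof (cases "integrable M Mn")
        case True
        have iR: "integrable M RHS" unfolding RHS_def using ia by auto
        have "integral\<^sup>L M Mn \<le> integral\<^sup>L M RHS" using True iR pw by (rule integral_mono)
        also have "integral\<^sup>L M RHS = (2 * F + \<bar>L\<bar> * D\<^sup>2) * \<eta> + D * \<kappa> + D / (\<kappa> * real T) * (\<Sum>t<T. v t)"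
          unfolding RHS_def v_def using ia by (simp add: integral_sum P.prob_space)
        also note bound
        finally show ?thesis unfolding Mn_def \<eta>_def .
      next
        case False
        then have "integral\<^sup>L M Mn = 0" by (rule not_integrable_integral_eq)
        moreover have "0 \<le> K0 * (\<eta> + sqrt C)" using K00 eta ABCE by simp
        ultimately show ?thesis unfolding Mn_def \<eta>_def by simp
      qed
    qed
    done
qed

end
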